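(* Let $\Phi_M$ be the measurement channel of a projective dichotomic qubit measurement $M=\{M_0,M_1\}$. The only way for $\Phi_M$ and another dichotomic qubit measurement channel $\Phi_N$, $N=\{N_0,N_1\}$, to form a Maximal Entanglement Worst Case pair is if $N$ is a biased version of the same measurement. For instance, if $M_0=\begin{pmatrix}1&0\\0&0\end{pmatrix}$, $M_1=\begin{pmatrix}0&0\\0&1\end{pmatrix}$, then necessarily $N_0=\begin{pmatrix}\alpha&0\\0&0\end{pmatrix}$, $N_1=\begin{pmatrix}1-\alpha&0\\0&1\end{pmatrix}$ with $\alpha\in[0,1]$.
   Context: The measurement channel of a POVM $M$ is $\Phi_M(\rho)=\sum_i\operatorname{Tr}(\rho M_i)\,|i\rangle\langle i|$. With $\Delta_\Phi=\Phi_M-\Phi_N$, input dimension $d=2$, Choi operator $J(\mathcal{S})=\sum_{ij}\mathcal{S}(|i\rangle\langle j|)\otimes|i\rangle\langle j|$, ME-norm $\|\mathcal{S}\|_{\mathrm{ME}}=\|J(\mathcal{S})/d\|_1$ and diamond norm $\|\mathcal{S}\|_\diamond=\max_{\rho_{AA'}}\|(\mathcal{S}\otimes I_{A'})\rho_{AA'}\|_1$, the pair is Maximal Entanglement Worst Case (MEWC) if $\|\Delta_\Phi\|_\diamond=d\|\Delta_\Phi\|_{\mathrm{ME}}$; for dichotomic qubit measurements with $M_1\neq N_1$ this is equivalent to $\det(M_0-N_0)=0$. *)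

theory Defs
  imports "Jordan_Normal_Form.Schur_Decomposition" "Jordan_Normal_Form.Char_Poly"
begin

definition mtrace :: "complex mat \<Rightarrow> complex" where
  "mtrace A = (\<Sum>i<dim_row A. A $$ (i, i))"

definition psd_mat :: "nat \<Rightarrow> complex mat \<Rightarrow> bool" where
  "psd_mat n A \<longleftrightarrow> A \<in> carrier_mat n n \<and> mat_adjoint A = A \<and>
     (\<forall>v \<in> carrier_vec n. 0 \<le> Re (conjugate v \<bullet> (A *\<^sub>v v)))"

definition povm2 :: "complex mat \<Rightarrow> complex mat \<Rightarrow> bool" where
  "povm2 P0 P1 \<longleftrightarrow> psd_mat 2 P0 \<and> psd_mat 2 P1 \<and> P0 + P1 = 1\<^sub>m 2"

definition proj_meas2 :: "complex mat \<Rightarrow> complex mat \<Rightarrow> bool" where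
  "proj_meas2 P0 P1 \<longleftrightarrow> povm2 P0 P1 \<and> P0 * P0 = P0 \<and> P1 * P1 = P1"

(* Kronecker product, index (i,k) |-> i * dim B + k *)
definition kron :: "complex mat \<Rightarrow> complex mat \<Rightarrow> complex mat" where
  "kron A B = mat (dim_row A * dim_row B) (dim_col A * dim_col B)
     (\<lambda>(r, c). A $$ (r div dim_row B, c div dim_col B) * B $$ (r mod dim_row B, c mod dim_col B))"

definition unit2 :: "nat \<Rightarrow> nat \<Rightarrow> complex mat" where
  "unit2 i j = mat 2 2 (\<lambda>(k, l). if k = i \<and> l = j then 1 else 0)"

definition meas_channel :: "complex mat \<Rightarrow> complex mat \<Rightarrow> complex mat \<Rightarrow> complex mat" where
  "meas_channel P0 P1 X = mat 2 2 (\<lambda>(i, j). if i = j then mtrace (X * (if i = 0 then P0 else P1)) else 0)"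

definition delta_channel :: "complex mat \<Rightarrow> complex mat \<Rightarrow> complex mat \<Rightarrow> complex mat \<Rightarrow> complex mat \<Rightarrow> complex mat" where
  "delta_channel M0 M1 N0 N1 X = meas_channel M0 M1 X - meas_channel N0 N1 X"

(* block (b,b') of a 4x4 operator on A (x) A', A = A' = C^2 *)
definition block2 :: "complex mat \<Rightarrow> nat \<Rightarrow> nat \<Rightarrow> complex mat" where
  "block2 \<rho> b b' = mat 2 2 (\<lambda>(a, a'). \<rho> $$ (2 * a + b, 2 * a' + b'))"

(* (S (x) I_{A'}) rho, A' = C^2 *)
definition tensor_id2 :: "(complex mat \<Rightarrow> complex mat) \<Rightarrow> complex mat \<Rightarrow> complex mat" where
  "tensor_id2 S \<rho> =
     kron (S (block2 \<rho> 0 0)) (unit2 0 0) + kron (S (block2 \<rho> 0 1)) (unit2 0 1) +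
     kron (S (block2 \<rho> 1 0)) (unit2 1 0) + kron (S (block2 \<rho> 1 1)) (unit2 1 1)"

definition choi2 :: "(complex mat \<Rightarrow> complex mat) \<Rightarrow> complex mat" where
  "choi2 S =
     kron (S (unit2 0 0)) (unit2 0 0) + kron (S (unit2 0 1)) (unit2 0 1) +
     kron (S (unit2 1 0)) (unit2 1 0) + kron (S (unit2 1 1)) (unit2 1 1)"

definition sq_singular_values :: "complex mat \<Rightarrow> complex list" where
  "sq_singular_values A = (SOME as. char_poly (mat_adjoint A * A) = (\<Prod>a\<leftarrow>as. [:- a, 1:]))"

definition trace_norm :: "complex mat \<Rightarrow> real" where
  "trace_norm A = (\<Sum>a\<leftarrow>sq_singular_values A. sqrt (cmod a))"

definition density_mat :: "nat \<Rightarrow> complex mat \<Rightarrow> bool" where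
  "density_mat n \<rho> \<longleftrightarrow> psd_mat n \<rho> \<and> mtrace \<rho> = 1"

(* diamond norm for maps on qubit inputs (ancilla A' of dimension d = 2) *)
definition diamond_norm2 :: "(complex mat \<Rightarrow> complex mat) \<Rightarrow> real" where
  "diamond_norm2 S = Sup {trace_norm (tensor_id2 S \<rho>) | \<rho>. density_mat 4 \<rho>}"

definition me_norm2 :: "(complex mat \<Rightarrow> complex mat) \<Rightarrow> real" where
  "me_norm2 S = trace_norm ((1 / 2 :: complex) \<cdot>\<^sub>m choi2 S)"

definition MEWC :: "complex mat \<Rightarrow> complex mat \<Rightarrow> complex mat \<Rightarrow> complex mat \<Rightarrow> bool" where
  "MEWC M0 M1 N0 N1 \<longleftrightarrow>
     diamond_norm2 (delta_channel M0 M1 N0 N1) = 2 * me_norm2 (delta_channel M0 M1 N0 N1)"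

end

theory Submission
  imports Defs
begin



lemma deg_lin_mset: "degree (\<Prod>a\<in>#(B::complex multiset). [:-a,1:]) = size B"
proof (induction B)
  case (add x B)
  have nz: "(\<Prod>a\<in>#B. [:-a,1:]) \<noteq> (0::complex poly)"
    by (auto simp add: prod_mset_zero_iff simp del: mult_pCons_left)
  have "degree ([:-x,1:] * (\<Prod>a\<in>#B. [:-a,1:])) = 1 + degree (\<Prod>a\<in>#B. [:-a,1:])"
    by (subst degree_mult_eq[OF _ nz]) auto
  then show ?case using add by (simp del: mult_pCons_left)
qed simp

lemma lin_prod_mset_unique:
  fixes A :: "complex multiset"
  shows "(\<Prod>a\<in>#A. [:-a,1:]) = (\<Prod>a\<in>#B. [:-a,1:]) \<Longrightarrow> A = B"
proof (induction A arbitrary: B)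
  case empty
  then have "degree (\<Prod>a\<in>#B. [:-a,1:]) = 0" by simp
  then show ?case
    using deg_lin_mset[of B] by simp
next
  case (add x A)
  have "poly (\<Prod>a\<in>#add_mset x A. [:-a,1:]) x = 0" by (simp del: mult_pCons_left)
  then have "poly (\<Prod>a\<in>#B. [:-a,1:]) x = 0" using add.prems by metis
  then have "x \<in># B" by (auto simp add: poly_prod_mset prod_mset_zero_iff simp del: mult_pCons_left)
  then obtain B' where B: "B = add_mset x B'" by (metis mset_add)
  have "[:-x,1:] * (\<Prod>a\<in>#A. [:-a,1:]) = [:-x,1:] * (\<Prod>a\<in>#B'. [:-a,1:])"
    using add.prems B by (simp del: mult_pCons_left)
  then have "(\<Prod>a\<in>#A. [:-a,1:]) = (\<Prod>a\<in>#B'. [:-a,1:])" by (simp del: mult_pCons_left)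
  then show ?case using add.IH B by simp
qed

lemma trace_norm_via:
  assumes "char_poly (mat_adjoint A * A) = (\<Prod>a\<leftarrow>L. [:- a, 1:])"
  shows "trace_norm A = (\<Sum>a\<leftarrow>L. sqrt (cmod a))"
proof -
  define as where "as = sq_singular_values A"
  have "char_poly (mat_adjoint A * A) = (\<Prod>a\<leftarrow>as. [:- a, 1:])"
    unfolding as_def sq_singular_values_def by (rule someI[of _ L], rule assms)
  then have "(\<Prod>a\<in>#mset as. [:-a,1:]) = (\<Prod>a\<in>#mset L. [:-a,1:])"
    using assms by (metis mset_map prod_mset_prod_list)
  then have "mset as = mset L" by (rule lin_prod_mset_unique)
  then have "(\<Sum>a\<leftarrow>as. sqrt (cmod a)) = (\<Sum>a\<leftarrow>L. sqrt (cmod a))"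
    by (metis mset_map sum_mset_sum_list)
  then show ?thesis unfolding trace_norm_def as_def .
qed
lemma adj_dims[simp]: "dim_row (mat_adjoint A) = dim_col A" "dim_col (mat_adjoint A) = dim_row A"
  unfolding mat_adjoint_def by auto

lemma adj_index[simp]: "i < dim_col A \<Longrightarrow> j < dim_row A \<Longrightarrow> mat_adjoint A $$ (i,j) = conjugate (A $$ (j,i))"
  unfolding mat_adjoint_def by (simp add: mat_of_rows_index)

lemma less2_cases: "(i::nat) < 2 \<longleftrightarrow> i = 0 \<or> i = 1" by auto
lemma less4_cases: "(i::nat) < 4 \<longleftrightarrow> i = 0 \<or> i = 1 \<or> i = 2 \<or> i = 3" by auto
lemma sum2: "(\<Sum>i<2. f i) = f 0 + f (1::nat)" by (simp add: numeral_2_eq_2)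
lemma sum4: "(\<Sum>i<4. f i) = f 0 + f 1 + f 2 + f (3::nat)" by (simp add: numeral_eq_Suc)
lemma sum2': "(\<Sum>i\<in>{0..<2}. f i) = f 0 + f (1::nat)" by (simp add: numeral_2_eq_2)
lemma sum4': "(\<Sum>i\<in>{0..<4}. f i) = f 0 + f 1 + f 2 + f (3::nat)" by (simp add: numeral_eq_Suc)

definition blk :: "complex mat \<Rightarrow> complex mat" where
  "blk S = mat 4 4 (\<lambda>(r,c). if r div 2 = c div 2 then (if r < 2 then S$$(r mod 2, c mod 2) else - S$$(r mod 2, c mod 2)) else 0)"

lemma blk_adj_mult:
  assumes S: "S \<in> carrier_mat 2 2"
  shows "mat_adjoint (blk S) * blk S = four_block_mat (mat_adjoint S * S) (0\<^sub>m 2 2) (0\<^sub>m 2 2) (mat_adjoint S * S)"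
proof (rule eq_matI)
  fix i j assume "i < dim_row (four_block_mat (mat_adjoint S * S) (0\<^sub>m 2 2) (0\<^sub>m 2 2) (mat_adjoint S * S))"
    "j < dim_col (four_block_mat (mat_adjoint S * S) (0\<^sub>m 2 2) (0\<^sub>m 2 2) (mat_adjoint S * S))"
  then have ij: "i < 4" "j < 4" using S by auto
  show "(mat_adjoint (blk S) * blk S) $$ (i, j) = four_block_mat (mat_adjoint S * S) (0\<^sub>m 2 2) (0\<^sub>m 2 2) (mat_adjoint S * S) $$ (i, j)"
    using ij S unfolding less4_cases
    by (auto simp: blk_def scalar_prod_def four_block_mat_def sum4' sum2' Let_def row_def col_def)
qed (use S in \<open>auto simp: blk_def\<close>)

lemma det2: "(A :: 'a :: comm_ring_1 mat) \<in> carrier_mat 2 2 \<Longrightarrow> det A = A$$(0,0)*A$$(1,1) - A$$(0,1)*A$$(1,0)"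
  apply (subst laplace_expansion_column[of A 2 0], simp, simp)
  apply (simp add: cofactor_def mat_delete_def numeral_2_eq_2 lessThan_Suc det_def)
  done

lemma char_poly2:
  assumes A: "(A :: complex mat) \<in> carrier_mat 2 2"
  shows "char_poly A = [:A$$(0,0)*A$$(1,1) - A$$(0,1)*A$$(1,0), -(A$$(0,0)+A$$(1,1)), 1:]"
proof -
  have "char_poly A = det (char_poly_matrix A)" by (simp add: char_poly_def)
  also have "\<dots> = char_poly_matrix A $$ (0,0) * char_poly_matrix A $$ (1,1) - char_poly_matrix A $$ (0,1) * char_poly_matrix A $$ (1,0)"
    by (rule det2) (use A in simp)
  also have "\<dots> = [:A$$(0,0)*A$$(1,1) - A$$(0,1)*A$$(1,0), -(A$$(0,0)+A$$(1,1)), 1:]"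
    using A by (simp add: char_poly_matrix_def algebra_simps)
  finally show ?thesis .
qed

lemma char_poly_blk:
  assumes S: "S \<in> carrier_mat 2 2"
  shows "char_poly (mat_adjoint (blk S) * blk S) = char_poly (mat_adjoint S * S) * char_poly (mat_adjoint S * S)"
  apply (rule char_poly_0_block[OF blk_adj_mult[OF S]])
  proof -
    have c: "mat_adjoint S * S \<in> carrier_mat 2 2" using S by auto
    show "\<exists>es. char_poly (mat_adjoint S * S) = (\<Prod>a\<leftarrow>es. [:- a, 1:])"
      using char_poly_factorized[OF c] by blast
    then show "\<exists>es. char_poly (mat_adjoint S * S) = (\<Prod>a\<leftarrow>es. [:- a, 1:])" .
  qed (use S in auto)

definition gfun :: "real \<Rightarrow> real \<Rightarrow> real" where
  "gfun t d = (if d \<ge> 0 then \<bar>t\<bar> else sqrt (t^2 - 4*d))"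

lemma gfun_eig: "gfun (u+v) (u*v) = \<bar>u\<bar> + \<bar>v\<bar>"
proof (cases "u*v \<ge> 0")
  case True
  then show ?thesis unfolding gfun_def
    by (auto simp: abs_if zero_le_mult_iff)
next
  case False
  have "(u+v)^2 - 4*(u*v) = (u-v)^2" by (simp add: power2_eq_square algebra_simps)
  then have "sqrt ((u+v)^2 - 4*(u*v)) = \<bar>u - v\<bar>" by simp
  also have "\<dots> = \<bar>u\<bar> + \<bar>v\<bar>" using False by (auto simp: abs_if zero_le_mult_iff)
  finally show ?thesis using False unfolding gfun_def by simp
qed

lemma lin2_prod: "(\<Prod>a\<leftarrow>[u,v]. [:- a, 1:]) = [:u*v, -(u+v), (1::'a::comm_ring_1):]"
  by (simp add: algebra_simps)

lemma trace_norm_blk: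
  assumes S: "S \<in> carrier_mat 2 2" and p: "S$$(0,0) = complex_of_real p" and r: "S$$(1,1) = complex_of_real r"
    and h: "S$$(1,0) = cnj (S$$(0,1))"
  shows "trace_norm (blk S) = 2 * gfun (p + r) (p*r - (cmod (S$$(0,1)))^2)"
proof -
  define z where "z = S$$(0,1)"
  define m where "m = (cmod z)^2"
  define t where "t = p + r"
  define d where "d = p*r - m"
  define s where "s = sqrt (t^2 - 4*d)"
  define l1 where "l1 = (t + s)/2"
  define l2 where "l2 = (t - s)/2"
  have zz: "z * cnj z = complex_of_real m" unfolding m_def by (metis complex_norm_square)
  have zz': "cnj z * z = complex_of_real m" using zz by (simp add: mult.commute)
  have "t^2 - 4*d = (p-r)^2 + 4*m" unfolding t_def d_def by (simp add: power2_eq_square algebra_simps)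
  then have nn: "t^2 - 4*d \<ge> 0" unfolding m_def by simp
  have ss: "s^2 = t^2 - 4*d" unfolding s_def using nn by simp
  have l12: "l1 + l2 = t" unfolding l1_def l2_def by (simp add: field_simps)
  have l12m: "l1 * l2 = d" unfolding l1_def l2_def using ss by (simp add: power2_eq_square field_simps)
  define Q where "Q = mat_adjoint S * S"
  have Q: "Q \<in> carrier_mat 2 2" unfolding Q_def using S by auto
  have Qe: "Q$$(0,0) = complex_of_real (p^2 + m)" "Q$$(1,1) = complex_of_real (r^2 + m)"
     "Q$$(0,1) = z * complex_of_real (p + r)" "Q$$(1,0) = cnj z * complex_of_real (p + r)"
  proof -
    have e: "S $$ (0, Suc 0) = z" "S $$ (Suc 0, 0) = cnj z" "S $$ (Suc 0, Suc 0) = complex_of_real r"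
      using h r by (simp_all add: z_def)
    show "Q$$(0,0) = complex_of_real (p^2 + m)" "Q$$(1,1) = complex_of_real (r^2 + m)"
     "Q$$(0,1) = z * complex_of_real (p + r)" "Q$$(1,0) = cnj z * complex_of_real (p + r)"
      unfolding Q_def using S p e zz zz'
      by (auto simp: scalar_prod_def sum2' row_def col_def power2_eq_square algebra_simps)
  qed
  have cpQ: "char_poly Q = [:complex_of_real (d^2), - complex_of_real (p^2 + r^2 + 2*m), 1:]"
  proof -
    have "char_poly Q = [:Q$$(0,0)*Q$$(1,1) - Q$$(0,1)*Q$$(1,0), -(Q$$(0,0)+Q$$(1,1)), 1:]"
      by (rule char_poly2[OF Q])
    also have "Q$$(0,0)*Q$$(1,1) - Q$$(0,1)*Q$$(1,0) = complex_of_real (d^2)"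
    proof -
      have "Q$$(0,0)*Q$$(1,1) - Q$$(0,1)*Q$$(1,0) = complex_of_real ((p^2+m)*(r^2+m) - m*(p+r)^2)"
      proof -
        have "z * complex_of_real (p + r) * (cnj z * complex_of_real (p + r)) = (z * cnj z) * complex_of_real ((p+r)^2)"
          by (simp add: power2_eq_square algebra_simps)
        then show ?thesis unfolding Qe zz by simp
      qed
      also have "(p^2+m)*(r^2+m) - m*(p+r)^2 = d^2" unfolding d_def by (simp add: power2_eq_square algebra_simps)
      finally show ?thesis .
    qed
    also have "-(Q$$(0,0)+Q$$(1,1)) = - complex_of_real (p^2 + r^2 + 2*m)" unfolding Qe by simp
    finally show ?thesis .
  qed
  define mu1 where "mu1 = complex_of_real (l1^2)"
  define mu2 where "mu2 = complex_of_real (l2^2)"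
  have "l1^2 * l2^2 = d^2" using l12m by (metis power_mult_distrib)
  moreover have "l1^2 + l2^2 = p^2 + r^2 + 2*m"
  proof -
    have "l1^2 + l2^2 = (l1+l2)^2 - 2*(l1*l2)" by (simp add: power2_eq_square algebra_simps)
    also have "\<dots> = p^2 + r^2 + 2*m" unfolding l12 l12m t_def d_def by (simp add: power2_eq_square algebra_simps)
    finally show ?thesis .
  qed
  ultimately have e1: "mu1 * mu2 = complex_of_real (d^2)" and e2: "mu1 + mu2 = complex_of_real (p^2 + r^2 + 2*m)"
    unfolding mu1_def mu2_def by (metis of_real_mult, metis of_real_add)
  have cpQ2: "char_poly Q = (\<Prod>a\<leftarrow>[mu1,mu2]. [:- a, 1:])"
    unfolding cpQ lin2_prod e1[symmetric] e2[symmetric] by simp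
  have pl: "(\<Prod>a\<leftarrow>[mu1,mu2,mu1,mu2]. [:- a, 1:]) = (\<Prod>a\<leftarrow>[mu1,mu2]. [:- a, 1:]) * (\<Prod>a\<leftarrow>[mu1,mu2]. [:- a, 1:])"
    by (simp only: list.map prod_list.Cons prod_list.Nil mult.assoc mult_1_right)
  have "char_poly (mat_adjoint (blk S) * blk S) = (\<Prod>a\<leftarrow>[mu1,mu2,mu1,mu2]. [:- a, 1:])"
    using char_poly_blk[OF S] cpQ2 unfolding Q_def pl by simp
  then have "trace_norm (blk S) = (\<Sum>a\<leftarrow>[mu1,mu2,mu1,mu2]. sqrt (cmod a))"
    by (rule trace_norm_via)
  also have "\<dots> = 2 * (\<bar>l1\<bar> + \<bar>l2\<bar>)"
  proof -
    have "cmod mu1 = l1^2" "cmod mu2 = l2^2" unfolding mu1_def mu2_def by (simp_all only: norm_of_real abs_power2)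
    then show ?thesis by simp
  qed
  also have "\<bar>l1\<bar> + \<bar>l2\<bar> = gfun t d" using gfun_eig[of l1 l2] l12 l12m by simp
  finally show ?thesis unfolding t_def d_def m_def z_def .
qed

definition Cm :: "complex mat \<Rightarrow> complex mat \<Rightarrow> complex mat" where
  "Cm \<rho> P = mat 2 2 (\<lambda>(b,b'). \<Sum>a<2. \<Sum>a'<2. \<rho>$$(2*a+b, 2*a'+b') * P$$(a',a))"

lemma tensor_blk:
  assumes M0: "M0 \<in> carrier_mat 2 2" and M1: "M1 \<in> carrier_mat 2 2"
    and N0: "N0 \<in> carrier_mat 2 2" and N1: "N1 \<in> carrier_mat 2 2"
    and MM: "M0 + M1 = 1\<^sub>m 2" and NN: "N0 + N1 = 1\<^sub>m 2"
    and R: "\<rho> \<in> carrier_mat 4 4"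
  shows "tensor_id2 (delta_channel M0 M1 N0 N1) \<rho> = blk (Cm \<rho> (M0 - N0))"
proof -
  have m1: "M1$$(i,j) = (if i = j then 1 else 0) - M0$$(i,j)" if "i<2" "j<2" for i j
    using arg_cong[OF MM, of "\<lambda>A. A$$(i,j)"] that M0 M1 by (auto simp: eq_diff_eq eq_neg_iff_add_eq_0 add.commute)
  have n1: "N1$$(i,j) = (if i = j then 1 else 0) - N0$$(i,j)" if "i<2" "j<2" for i j
    using arg_cong[OF NN, of "\<lambda>A. A$$(i,j)"] that N0 N1 by (auto simp: eq_diff_eq eq_neg_iff_add_eq_0 add.commute)
  show ?thesis
  proof (rule eq_matI)
    fix i j assume "i < dim_row (blk (Cm \<rho> (M0 - N0)))" "j < dim_col (blk (Cm \<rho> (M0 - N0)))"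
    then have ij: "i < 4" "j < 4" by (auto simp: blk_def)
    show "tensor_id2 (delta_channel M0 M1 N0 N1) \<rho> $$ (i, j) = blk (Cm \<rho> (M0 - N0)) $$ (i, j)"
      using ij M0 M1 N0 N1 R unfolding less4_cases
      by (auto simp: blk_def Cm_def tensor_id2_def kron_def unit2_def delta_channel_def meas_channel_def
          mtrace_def block2_def sum2 scalar_prod_def sum2' row_def col_def m1 n1 algebra_simps)
  qed (auto simp: blk_def tensor_id2_def kron_def unit2_def delta_channel_def meas_channel_def)
qed

lemma choi_blk:
  assumes M0: "M0 \<in> carrier_mat 2 2" and M1: "M1 \<in> carrier_mat 2 2"
    and N0: "N0 \<in> carrier_mat 2 2" and N1: "N1 \<in> carrier_mat 2 2"
    and MM: "M0 + M1 = 1\<^sub>m 2" and NN: "N0 + N1 = 1\<^sub>m 2"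
  shows "(1/2::complex) \<cdot>\<^sub>m choi2 (delta_channel M0 M1 N0 N1) = blk (mat 2 2 (\<lambda>(k,l). (M0 - N0)$$(l,k) / 2))"
proof -
  have m1: "M1$$(i,j) = (if i = j then 1 else 0) - M0$$(i,j)" if "i<2" "j<2" for i j
    using arg_cong[OF MM, of "\<lambda>A. A$$(i,j)"] that M0 M1 by (auto simp: eq_diff_eq eq_neg_iff_add_eq_0 add.commute)
  have n1: "N1$$(i,j) = (if i = j then 1 else 0) - N0$$(i,j)" if "i<2" "j<2" for i j
    using arg_cong[OF NN, of "\<lambda>A. A$$(i,j)"] that N0 N1 by (auto simp: eq_diff_eq eq_neg_iff_add_eq_0 add.commute)
  show ?thesis
  proof (rule eq_matI)
    fix i j assume "i < dim_row (blk (mat 2 2 (\<lambda>(k,l). (M0 - N0)$$(l,k) / 2)))" "j < dim_col (blk (mat 2 2 (\<lambda>(k,l). (M0 - N0)$$(l,k) / 2)))"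
    then have ij: "i < 4" "j < 4" by (auto simp: blk_def)
    show "((1/2::complex) \<cdot>\<^sub>m choi2 (delta_channel M0 M1 N0 N1)) $$ (i, j) = blk (mat 2 2 (\<lambda>(k,l). (M0 - N0)$$(l,k) / 2)) $$ (i, j)"
      using ij M0 M1 N0 N1 unfolding less4_cases
      by (auto simp: blk_def choi2_def kron_def unit2_def delta_channel_def meas_channel_def
          mtrace_def sum2 scalar_prod_def sum2' row_def col_def m1 n1 algebra_simps diff_divide_distrib)
  qed (auto simp: blk_def choi2_def kron_def unit2_def delta_channel_def meas_channel_def)
qed



definition psd2 :: "complex mat \<Rightarrow> bool" where
  "psd2 X \<longleftrightarrow> X \<in> carrier_mat 2 2 \<and> X$$(0,0) = complex_of_real (Re (X$$(0,0))) \<and> X$$(1,1) = complex_of_real (Re (X$$(1,1)))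
     \<and> Re (X$$(0,0)) \<ge> 0 \<and> Re (X$$(1,1)) \<ge> 0 \<and> X$$(1,0) = cnj (X$$(0,1))
     \<and> (cmod (X$$(0,1)))^2 \<le> Re (X$$(0,0)) * Re (X$$(1,1))"

lemma qf2:
  fixes f :: "nat \<Rightarrow> complex"
  assumes "X \<in> carrier_mat 2 2"
  shows "conjugate (vec 2 f) \<bullet> (X *\<^sub>v vec 2 f) = cnj (f 0) * (X$$(0,0) * f 0 + X$$(0,1) * f 1) + cnj (f 1) * (X$$(1,0) * f 0 + X$$(1,1) * f 1)"
  using assms by (simp add: scalar_prod_def sum2' mult_mat_vec_def row_def)

lemma psd_mat2_psd2:
  assumes P: "psd_mat 2 X"
  shows "psd2 X"
proof -
  have X: "X \<in> carrier_mat 2 2" and adj: "mat_adjoint X = X"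
    and pos: "\<And>v. v \<in> carrier_vec 2 \<Longrightarrow> 0 \<le> Re (conjugate v \<bullet> (X *\<^sub>v v))"
    using P unfolding psd_mat_def by auto
  have herm: "X$$(i,j) = cnj (X$$(j,i))" if "i < 2" "j < 2" for i j
    using arg_cong[OF adj, of "\<lambda>A. A$$(i,j)"] X that by simp
  define a where "a = Re (X$$(0,0))"
  define c where "c = Re (X$$(1,1))"
  define b where "b = X$$(0,1)"
  have "Im (X$$(0,0)) = 0" using arg_cong[OF herm[of 0 0], of Im] by simp
  then have Xa: "X$$(0,0) = complex_of_real a" unfolding a_def by (simp add: complex_eq_iff)
  have "Im (X$$(1,1)) = 0" using arg_cong[OF herm[of 1 1], of Im] by simp
  then have Xc: "X$$(1,1) = complex_of_real c" unfolding c_def by (simp add: complex_eq_iff)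
  have Xb: "X$$(1,0) = cnj b" unfolding b_def using herm[of 1 0] by simp
  have Q: "0 \<le> Re (cnj (f 0) * (X$$(0,0) * f 0 + X$$(0,1) * f 1) + cnj (f 1) * (X$$(1,0) * f 0 + X$$(1,1) * f 1))" for f :: "nat \<Rightarrow> complex"
    using pos[of "vec 2 f"] qf2[OF X, of f] by simp
  have bb: "b * cnj b = complex_of_real ((cmod b)^2)" by (metis complex_norm_square)
  have a0: "a \<ge> 0" using Q[of "\<lambda>i. if i = 0 then 1 else 0"] Xa by simp
  have c0: "c \<ge> 0" using Q[of "\<lambda>i. if i = 0 then 0 else 1"] Xc by simp
  define A where "A = complex_of_real a"
  define C where "C = complex_of_real c"
  define B where "B = complex_of_real ((cmod b)^2)"
  have bbB: "b * cnj b = B" unfolding B_def by (rule bb)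
  have cAC: "cnj A = A" "cnj C = C" unfolding A_def C_def by simp_all
  have q1: "0 \<le> c * (a*c - (cmod b)^2)"
  proof -
    have "cnj (complex_of_real c) * (X$$(0,0) * complex_of_real c + X$$(0,1) * (- cnj b)) + cnj (- cnj b) * (X$$(1,0) * complex_of_real c + X$$(1,1) * (- cnj b))
       = C * (A * C - B)"
      unfolding Xa Xc Xb b_def[symmetric] complex_cnj_complex_of_real complex_cnj_minus complex_cnj_cnj
        A_def[symmetric] C_def[symmetric] cAC by (simp add: algebra_simps bbB[symmetric])
    also have "\<dots> = complex_of_real (c * (a*c - (cmod b)^2))" unfolding A_def B_def C_def by simp
    finally show ?thesis using Q[of "\<lambda>i. if i = 0 then complex_of_real c else - cnj b"] by simp
  qed
  have q2: "0 \<le> a * (a*c - (cmod b)^2)"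
  proof -
    have "cnj (- b) * (X$$(0,0) * (- b) + X$$(0,1) * complex_of_real a) + cnj (complex_of_real a) * (X$$(1,0) * (- b) + X$$(1,1) * complex_of_real a)
       = A * (A * C - B)"
      unfolding Xa Xc Xb b_def[symmetric] complex_cnj_complex_of_real complex_cnj_minus complex_cnj_cnj
        A_def[symmetric] C_def[symmetric] cAC by (simp add: algebra_simps bbB[symmetric])
    also have "\<dots> = complex_of_real (a * (a*c - (cmod b)^2))" unfolding A_def B_def C_def by simp
    finally show ?thesis using Q[of "\<lambda>i. if i = 0 then - b else complex_of_real a"] by simp
  qed
  have q3: "0 \<le> a + c * (cmod b)^2 - 2 * (cmod b)^2"
  proof -
    have "cnj 1 * (X$$(0,0) * 1 + X$$(0,1) * (- cnj b)) + cnj (- cnj b) * (X$$(1,0) * 1 + X$$(1,1) * (- cnj b))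
       = A + C * B - 2 * B"
      unfolding Xa Xc Xb b_def[symmetric] complex_cnj_complex_of_real complex_cnj_minus complex_cnj_cnj complex_cnj_one
        A_def[symmetric] C_def[symmetric] cAC by (simp add: algebra_simps bbB[symmetric])
    also have "\<dots> = complex_of_real (a + c * (cmod b)^2 - 2 * (cmod b)^2)" unfolding A_def B_def C_def by simp
    finally show ?thesis using Q[of "\<lambda>i. if i = 0 then 1 else - cnj b"] by simp
  qed
  have det: "(cmod b)^2 \<le> a * c"
  proof (cases "a + c > 0")
    case True
    have "0 \<le> (a + c) * (a*c - (cmod b)^2)" using q1 q2 by (simp add: algebra_simps)
    then show ?thesis using True by (simp add: zero_le_mult_iff)
  next
    case False
    then have "a = 0" "c = 0" using a0 c0 by auto
    then show ?thesis using q3 by simp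
  qed
  show ?thesis unfolding psd2_def using X Xa Xc Xb a0 c0 det
    by (simp add: a_def c_def b_def)
qed

definition outer :: "(nat \<Rightarrow> complex) \<Rightarrow> complex mat" where
  "outer e = mat 2 2 (\<lambda>(i,j). e i * cnj (e j))"

lemma Cm_outer_psd:
  assumes R: "psd_mat 4 \<rho>"
  shows "psd_mat 2 (Cm \<rho> (outer e))"
proof -
  have Rc: "\<rho> \<in> carrier_mat 4 4" and adj: "mat_adjoint \<rho> = \<rho>"
    and pos: "\<And>v. v \<in> carrier_vec 4 \<Longrightarrow> 0 \<le> Re (conjugate v \<bullet> (\<rho> *\<^sub>v v))"
    using R unfolding psd_mat_def by auto
  have herm: "cnj (\<rho>$$(i,j)) = \<rho>$$(j,i)" if "i < 4" "j < 4" for i j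
    using arg_cong[OF adj, of "\<lambda>A. A$$(j,i)"] Rc that by simp
  have h2: "mat_adjoint (Cm \<rho> (outer e)) = Cm \<rho> (outer e)"
  proof (rule eq_matI)
    fix i j assume "i < dim_row (Cm \<rho> (outer e))" "j < dim_col (Cm \<rho> (outer e))"
    then have ij: "i < 2" "j < 2" by (auto simp: Cm_def)
    show "mat_adjoint (Cm \<rho> (outer e)) $$ (i, j) = Cm \<rho> (outer e) $$ (i, j)"
      using ij unfolding less2_cases
      by (auto simp: Cm_def outer_def sum2 herm algebra_simps)
  qed (auto simp: Cm_def)
  have qf: "0 \<le> Re (conjugate v \<bullet> (Cm \<rho> (outer e) *\<^sub>v v))" if v: "v \<in> carrier_vec 2" for v
  proof -
    define w where "w = vec 4 (\<lambda>k. e (k div 2) * v$(k mod 2))"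
    have we: "w$0 = e 0 * v$0" "w$1 = e 0 * v$1" "w$2 = e 1 * v$0" "w$3 = e 1 * v$1" "dim_vec w = 4"
      unfolding w_def by auto
    have "conjugate v \<bullet> (Cm \<rho> (outer e) *\<^sub>v v) = conjugate w \<bullet> (\<rho> *\<^sub>v w)"
      using v Rc we
      by (simp add: Cm_def outer_def sum2 sum2' sum4' scalar_prod_def mult_mat_vec_def row_def algebra_simps numeral_2_eq_2 numeral_3_eq_3)
    then show ?thesis using pos[of w] unfolding w_def by simp
  qed
  show ?thesis unfolding psd_mat_def using h2 qf by (auto simp: Cm_def)
qed

lemma psd_mat_add:
  assumes A: "psd_mat n A" and B: "psd_mat n B"
  shows "psd_mat n (A + B)"
proof -
  have Ac: "A \<in> carrier_mat n n" and Bc: "B \<in> carrier_mat n n" using A B unfolding psd_mat_def by auto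
  have "mat_adjoint (A + B) = mat_adjoint A + mat_adjoint B"
    by (rule eq_matI) (use Ac Bc in auto)
  then have adj: "mat_adjoint (A + B) = A + B" using A B unfolding psd_mat_def by simp
  have "0 \<le> Re (conjugate v \<bullet> ((A + B) *\<^sub>v v))" if v: "v \<in> carrier_vec n" for v
  proof -
    have "(A + B) *\<^sub>v v = A *\<^sub>v v + B *\<^sub>v v" using add_mult_distrib_mat_vec[OF Ac Bc v] .
    then have "conjugate v \<bullet> ((A + B) *\<^sub>v v) = conjugate v \<bullet> (A *\<^sub>v v) + conjugate v \<bullet> (B *\<^sub>v v)"
      using v Ac Bc by (simp add: scalar_prod_add_distrib[of "conjugate v" n])
    then show ?thesis using A B v unfolding psd_mat_def by simp
  qed
  then show ?thesis unfolding psd_mat_def using adj Ac Bc by auto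
qed

lemma Cm_add:
  assumes "A \<in> carrier_mat 2 2" "B \<in> carrier_mat 2 2"
  shows "Cm \<rho> (A + B) = Cm \<rho> A + Cm \<rho> B"
  by (rule eq_matI) (use assms in \<open>auto simp: Cm_def sum2 algebra_simps less2_cases\<close>)

lemma psd2_chol:
  assumes P: "psd2 P"
  shows "\<exists>e1 e2. P = outer e1 + outer e2"
proof -
  define a where "a = Re (P$$(0,0))"
  define c where "c = Re (P$$(1,1))"
  define b where "b = P$$(0,1)"
  have Pc: "P \<in> carrier_mat 2 2" and Pa: "P$$(0,0) = complex_of_real a" and Pcc: "P$$(1,1) = complex_of_real c"
    and Pb: "P$$(1,0) = cnj b" and a0: "a \<ge> 0" and c0: "c \<ge> 0" and det: "(cmod b)^2 \<le> a * c"
    using P unfolding psd2_def a_def b_def c_def by auto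
  have bb: "b * cnj b = complex_of_real ((cmod b)^2)" by (metis complex_norm_square)
  show ?thesis
  proof (cases "a > 0")
    case True
    define e1 where "e1 = (\<lambda>i::nat. if i = 0 then complex_of_real (sqrt a) else cnj b / complex_of_real (sqrt a))"
    define e2 where "e2 = (\<lambda>i::nat. if i = 0 then 0 else complex_of_real (sqrt (c - (cmod b)^2 / a)))"
    have nn: "c - (cmod b)^2 / a \<ge> 0" using det True by (simp add: field_simps)
    have sa: "complex_of_real (sqrt a) * complex_of_real (sqrt a) = complex_of_real a"
      unfolding of_real_mult[symmetric] using True by simp
    have sa0: "complex_of_real (sqrt a) \<noteq> 0" using True by simp
    have "P = outer e1 + outer e2"
    proof (rule eq_matI)
      fix i j assume "i < dim_row (outer e1 + outer e2)" "j < dim_col (outer e1 + outer e2)"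
      then have ij: "i < 2" "j < 2" by (auto simp: outer_def)
      have c11: "cnj b / complex_of_real (sqrt a) * cnj (cnj b / complex_of_real (sqrt a)) + complex_of_real (sqrt (c - (cmod b)^2 / a)) * complex_of_real (sqrt (c - (cmod b)^2 / a)) = complex_of_real c"
      proof -
        have "cnj b / complex_of_real (sqrt a) * cnj (cnj b / complex_of_real (sqrt a)) = (b * cnj b) / complex_of_real a"
          using sa by (simp add: field_simps)
        also have "\<dots> = complex_of_real ((cmod b)^2 / a)" unfolding bb by simp
        moreover have "complex_of_real (sqrt (c - (cmod b)^2 / a)) * complex_of_real (sqrt (c - (cmod b)^2 / a)) = complex_of_real (c - (cmod b)^2 / a)"
          unfolding of_real_mult[symmetric] using nn by simp
        ultimately show ?thesis by (simp flip: of_real_add)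
      qed
      show "P $$ (i, j) = (outer e1 + outer e2) $$ (i, j)"
        using ij Pc Pa Pcc Pb sa sa0 c11 unfolding less2_cases
        by (auto simp: outer_def e1_def e2_def b_def)
    qed (use Pc in \<open>auto simp: outer_def\<close>)
    then show ?thesis by blast
  next
    case False
    then have "a = 0" using a0 by simp
    then have b0: "b = 0" using det by simp
    define e1 where "e1 = (\<lambda>i::nat. if i = 0 then 0 else complex_of_real (sqrt c))"
    have sc: "complex_of_real (sqrt c) * complex_of_real (sqrt c) = complex_of_real c"
      unfolding of_real_mult[symmetric] using c0 by simp
    have "P = outer e1 + outer (\<lambda>_. 0)"
    proof (rule eq_matI)
      fix i j assume "i < dim_row (outer e1 + outer (\<lambda>_. 0))" "j < dim_col (outer e1 + outer (\<lambda>_. 0))"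
      then have ij: "i < 2" "j < 2" by (auto simp: outer_def)
      show "P $$ (i, j) = (outer e1 + outer (\<lambda>_. 0)) $$ (i, j)"
        using ij Pc Pa Pcc Pb sc b0 \<open>a = 0\<close> unfolding less2_cases
        by (auto simp: outer_def e1_def b_def)
    qed (use Pc in \<open>auto simp: outer_def\<close>)
    then show ?thesis by blast
  qed
qed

lemma Cm_psd:
  assumes R: "psd_mat 4 \<rho>" and P: "psd2 P"
  shows "psd2 (Cm \<rho> P)"
proof -
  obtain e1 e2 where "P = outer e1 + outer e2" using psd2_chol[OF P] by blast
  then have "Cm \<rho> P = Cm \<rho> (outer e1) + Cm \<rho> (outer e2)"
    by (simp add: Cm_add outer_def)
  moreover have "psd_mat 2 (Cm \<rho> (outer e1) + Cm \<rho> (outer e2))"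
    by (rule psd_mat_add[OF Cm_outer_psd[OF R] Cm_outer_psd[OF R]])
  ultimately show ?thesis using psd_mat2_psd2 by simp
qed




lemma cs_half:
  fixes c P Q :: real
  assumes "c^2 \<le> P * Q" "P \<ge> 0" "Q \<ge> 0"
  shows "2 * \<bar>c\<bar> \<le> P + Q"
proof -
  have "(2*\<bar>c\<bar>)^2 \<le> (P + Q)^2"
  proof -
    have "(2*\<bar>c\<bar>)^2 = 4 * c^2" by (simp add: power2_eq_square)
    also have "\<dots> \<le> 4 * (P*Q)" using assms by simp
    also have "\<dots> \<le> (P+Q)^2" using sum_squares_ge_zero[of "P - Q" 0]
      by (simp add: power2_eq_square algebra_simps)
    finally show ?thesis .
  qed
  then show ?thesis by (rule power2_le_imp_le) (use assms in auto)
qed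

lemma real_bound:
  fixes a1 a2 b1 b2 x1 x2 y1 y2 al be :: real
  assumes a1: "a1 \<ge> 0" and a2: "a2 \<ge> 0" and b1: "b1 \<ge> 0" and b2: "b2 \<ge> 0"
    and x: "x1^2 + x2^2 \<le> a1 * a2" and y: "y1^2 + y2^2 \<le> b1 * b2"
  shows "gfun (al*(a1+a2) + be*(b1+b2)) ((al*a1+be*b1)*(al*a2+be*b2) - ((al*x1+be*y1)^2 + (al*x2+be*y2)^2))
     \<le> \<bar>al\<bar>*(a1+a2) + \<bar>be\<bar>*(b1+b2)"
proof -
  define c where "c = x1*y1 + x2*y2"
  have "c^2 \<le> (x1^2+x2^2)*(y1^2+y2^2)" unfolding c_def
    using sum_squares_ge_zero[of "x1*y2 - x2*y1" 0] by (simp add: power2_eq_square algebra_simps)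
  also have "\<dots> \<le> (a1*a2)*(b1*b2)"
  proof -
    have "0 \<le> a1*a2" using a1 a2 by simp
    then show ?thesis using x y by (intro mult_mono) auto
  qed
  finally have cc: "c^2 \<le> (a1*a2)*(b1*b2)" .
  have h1: "2*\<bar>c\<bar> \<le> a1*b2 + a2*b1" using cs_half[of c "a1*b2" "a2*b1"] cc a1 a2 b1 b2 by (simp add: algebra_simps)
  have h2: "2*\<bar>c\<bar> \<le> a1*b1 + a2*b2" using cs_half[of c "a1*b1" "a2*b2"] cc a1 a2 b1 b2 by (simp add: algebra_simps)
  define t where "t = al*(a1+a2) + be*(b1+b2)"
  define d where "d = (al*a1+be*b1)*(al*a2+be*b2) - ((al*x1+be*y1)^2 + (al*x2+be*y2)^2)"
  define R where "R = \<bar>al\<bar>*(a1+a2) + \<bar>be\<bar>*(b1+b2)"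
  have R0: "R \<ge> 0" unfolding R_def using a1 a2 b1 b2 by simp
  have key: "R^2 - (t^2 - 4*d) = 4*al^2*(a1*a2 - (x1^2+x2^2)) + 4*be^2*(b1*b2 - (y1^2+y2^2))
      + 2*(\<bar>al\<bar>*\<bar>be\<bar>*(a1+a2)*(b1+b2) - al*be*(a1-a2)*(b1-b2) - 4*al*be*c)"
  proof -
    have R2: "R^2 = al^2*(a1+a2)^2 + be^2*(b1+b2)^2 + 2*(\<bar>al\<bar>*\<bar>be\<bar>)*(a1+a2)*(b1+b2)"
      unfolding R_def by (simp add: power2_eq_square algebra_simps)
    show ?thesis unfolding R2 t_def d_def c_def by (simp add: power2_eq_square algebra_simps)
  qed
  have br: "\<bar>al\<bar>*\<bar>be\<bar>*(a1+a2)*(b1+b2) - al*be*(a1-a2)*(b1-b2) - 4*al*be*c \<ge> 0"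
  proof (cases "al*be \<ge> 0")
    case True
    then have "\<bar>al\<bar>*\<bar>be\<bar>*(a1+a2)*(b1+b2) - al*be*(a1-a2)*(b1-b2) - 4*al*be*c = (al*be)*(2*(a1*b2+a2*b1) - 4*c)"
      by (simp add: algebra_simps flip: abs_mult)
    moreover have "2*(a1*b2+a2*b1) - 4*c \<ge> 0" using h1 by (smt (verit) abs_ge_self)
    ultimately show ?thesis using True by simp
  next
    case False
    then have "\<bar>al\<bar>*\<bar>be\<bar>*(a1+a2)*(b1+b2) - al*be*(a1-a2)*(b1-b2) - 4*al*be*c = (-(al*be))*(2*(a1*b1+a2*b2) + 4*c)"
      by (simp add: algebra_simps flip: abs_mult)
    moreover have "2*(a1*b1+a2*b2) + 4*c \<ge> 0" using h2 by (smt (verit) abs_ge_minus_self)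
    moreover have "(-(al*be))*(2*(a1*b1+a2*b2) + 4*c) \<ge> 0"
      using False \<open>2*(a1*b1+a2*b2) + 4*c \<ge> 0\<close> by (intro mult_nonneg_nonneg) auto
    ultimately show ?thesis by linarith
  qed
  have "R^2 - (t^2 - 4*d) \<ge> 0" unfolding key using br x y by (intro add_nonneg_nonneg mult_nonneg_nonneg) auto
  then have le: "t^2 - 4*d \<le> R^2" by simp
  show ?thesis
  proof (cases "d \<ge> 0")
    case True
    have "\<bar>t\<bar> \<le> \<bar>al*(a1+a2)\<bar> + \<bar>be*(b1+b2)\<bar>" unfolding t_def by (rule abs_triangle_ineq)
    also have "\<dots> = R" unfolding R_def abs_mult using a1 a2 b1 b2 by simp
    finally have "\<bar>t\<bar> \<le> R" .
    then show ?thesis using True unfolding gfun_def t_def[symmetric] d_def[symmetric] R_def[symmetric] by simp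
  next
    case False
    have "sqrt (t^2 - 4*d) \<le> sqrt (R^2)" using le by (rule real_sqrt_le_mono)
    then have "sqrt (t^2 - 4*d) \<le> R" using R0 by simp
    then show ?thesis using False unfolding gfun_def t_def[symmetric] d_def[symmetric] R_def[symmetric] by simp
  qed
qed



lemma tr_psd:
  fixes p1 p2 q1 q2 u1 u2 v1 v2 :: real
  assumes "p1 \<ge> 0" "p2 \<ge> 0" "q1 \<ge> 0" "q2 \<ge> 0" "u1^2 + u2^2 \<le> p1*p2" "v1^2 + v2^2 \<le> q1*q2"
  shows "p1*q1 + p2*q2 + 2*(u1*v1 + u2*v2) \<ge> 0"
proof -
  define k where "k = u1*v1 + u2*v2"
  have "k^2 \<le> (u1^2+u2^2)*(v1^2+v2^2)" unfolding k_def
    using sum_squares_ge_zero[of "u1*v2 - u2*v1" 0] by (simp add: power2_eq_square algebra_simps)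
  also have "\<dots> \<le> (p1*p2)*(q1*q2)"
  proof -
    have "0 \<le> p1*p2" using assms by simp
    then show ?thesis using assms by (intro mult_mono) auto
  qed
  finally have kk: "k^2 \<le> (p1*q1)*(p2*q2)" by (simp add: algebra_simps)
  have "(2*\<bar>k\<bar>)^2 \<le> (p1*q1 + p2*q2)^2"
  proof -
    have "(2*\<bar>k\<bar>)^2 = 4 * k^2" by (simp add: power2_eq_square)
    also have "\<dots> \<le> 4 * ((p1*q1)*(p2*q2))" using kk by simp
    also have "\<dots> \<le> (p1*q1 + p2*q2)^2" using sum_squares_ge_zero[of "p1*q1 - p2*q2" 0]
      by (simp add: power2_eq_square algebra_simps)
    finally show ?thesis .
  qed
  then have "2*\<bar>k\<bar> \<le> p1*q1 + p2*q2" by (rule power2_le_imp_le) (use assms in auto)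
  moreover have "- k \<le> \<bar>k\<bar>" by simp
  ultimately have "0 \<le> p1*q1 + p2*q2 + 2*k" by linarith
  then show ?thesis unfolding k_def .
qed

lemma part2_real:
  fixes a c b1 b2 x w y1 y2 :: real
  assumes ac: "a + c = 1" and bb: "b1^2 + b2^2 = a*c" and a0: "a \<ge> 0" and c0: "c \<ge> 0"
    and x0: "x \<ge> 0" and w0: "w \<ge> 0" and yN0: "y1^2 + y2^2 \<le> x*w"
    and x1: "1 - x \<ge> 0" and w1: "1 - w \<ge> 0" and yN1: "y1^2 + y2^2 \<le> (1-x)*(1-w)"
    and det: "(a-x)*(c-w) - ((b1-y1)^2 + (b2-y2)^2) = 0"
  shows "\<exists>\<alpha>. 0 \<le> \<alpha> \<and> \<alpha> \<le> 1 \<and>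
    ((x = \<alpha>*a \<and> y1 = \<alpha>*b1 \<and> y2 = \<alpha>*b2 \<and> w = \<alpha>*c) \<or>
     (x = a + (1-\<alpha>)*c \<and> y1 = \<alpha>*b1 \<and> y2 = \<alpha>*b2 \<and> w = c + (1-\<alpha>)*a))"
proof -
  define al where "al = a*x + c*w + 2*(b1*y1 + b2*y2)"
  define ga where "ga = c*x + a*w - 2*(b1*y1 + b2*y2)"
  define e0 where "e0 = a*x + b1*y1 + b2*y2 - al*a"
  define e1 where "e1 = b2*y1 - b1*y2"
  define e2 where "e2 = a*y1 + b1*w - al*b1"
  define e3 where "e3 = a*y2 + b2*w - al*b2"
  define e4 where "e4 = b1*x + c*y1 - al*b1"
  define e5 where "e5 = - b2*x - c*y2 + al*b2"
  define e6 where "e6 = b1*y1 + b2*y2 + c*w - al*c"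
  define e7 where "e7 = b1*y2 - b2*y1"
  have bbM: "(-b1)^2 + (-b2)^2 \<le> c*a" using bb by (simp add: algebra_simps)
  have bbl: "b1^2 + b2^2 \<le> a*c" using bb by simp
  have al0: "al \<ge> 0" unfolding al_def using tr_psd[OF x0 w0 a0 c0 yN0 bbl] by (simp add: algebra_simps)
  have al1: "1 - al \<ge> 0"
  proof -
    have "(1-x)*a + (1-w)*c + 2*((-y1)*b1 + (-y2)*b2) \<ge> 0"
      using tr_psd[OF x1 w1 a0 c0 _ bbl, of "-y1" "-y2"] yN1 by simp
    then show ?thesis unfolding al_def using ac by (simp add: algebra_simps)
  qed
  have ga0: "ga \<ge> 0"
  proof -
    have "x*c + w*a + 2*(y1*(-b1) + y2*(-b2)) \<ge> 0" using tr_psd[OF x0 w0 c0 a0 yN0 bbM] by simp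
    then show ?thesis unfolding ga_def by (simp add: algebra_simps)
  qed
  have ga1: "1 - ga \<ge> 0"
  proof -
    have "(1-x)*c + (1-w)*a + 2*((-y1)*(-b1) + (-y2)*(-b2)) \<ge> 0"
      using tr_psd[OF x1 w1 c0 a0 _ bbM, of "-y1" "-y2"] yN1 by simp
    then show ?thesis unfolding ga_def using ac by (simp add: algebra_simps)
  qed
  have I1: "(a-x)*(c-w) - ((b1-y1)^2 + (b2-y2)^2) = x*w - (y1^2+y2^2) - ga"
    unfolding ga_def using bb by (simp add: power2_eq_square algebra_simps)
  have cc: "c = 1 - a" using ac by simp
  define sB where "sB = b1^2 + b2^2"
  define sY where "sY = y1^2 + y2^2"
  define ss where "ss = b1*y1 + b2*y2"
  have E01: "e2^2 + e3^2 = a^2*sY + (w-al)^2*sB + 2*a*(w-al)*ss"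
    unfolding e2_def e3_def sB_def sY_def ss_def by (simp add: power2_eq_square algebra_simps)
  have E10: "e4^2 + e5^2 = c^2*sY + (x-al)^2*sB + 2*c*(x-al)*ss"
    unfolding e4_def e5_def sB_def sY_def ss_def by (simp add: power2_eq_square algebra_simps)
  have E0: "e0 = a*x + ss - al*a" "e6 = ss + c*w - al*c" unfolding e0_def e6_def ss_def by simp_all
  have Eq: "e1^2 = sB*sY - ss^2" "e7^2 = sB*sY - ss^2"
    unfolding e1_def e7_def sB_def sY_def ss_def by (simp_all add: power2_eq_square algebra_simps)
  have alss: "al = a*x + c*w + 2*ss" unfolding al_def ss_def by simp
  have gass: "ga = c*x + a*w - 2*ss" unfolding ga_def ss_def by simp
  have sBac: "sB = a*c" unfolding sB_def using bb .
  have I2: "e0^2+e1^2+e2^2+e3^2+e4^2+e5^2+e6^2+e7^2 = al*ga - (x*w - (y1^2+y2^2))"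
  proof -
    have "e0^2+e1^2+e2^2+e3^2+e4^2+e5^2+e6^2+e7^2 = e0^2 + e1^2 + (e2^2 + e3^2) + (e4^2 + e5^2) + e6^2 + e7^2"
      by simp
    also have "\<dots> = (a*x + ss - al*a)^2 + (sB*sY - ss^2) + (a^2*sY + (w-al)^2*sB + 2*a*(w-al)*ss)
       + (c^2*sY + (x-al)^2*sB + 2*c*(x-al)*ss) + (ss + c*w - al*c)^2 + (sB*sY - ss^2)"
      unfolding E01 E10 E0 Eq ..
    also have "\<dots> = al*ga - (x*w - sY)"
      unfolding alss gass sBac cc by (simp add: power2_eq_square algebra_simps)
    finally show ?thesis unfolding sY_def .
  qed
  have I3: "x - al*a - ga*c = 2*e0" "y1 - al*b1 + ga*b1 = e2 + e4" "y2 - al*b2 + ga*b2 = e3 - e5"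
     "w - al*c - ga*a = 2*e6"
    unfolding e0_def e1_def e2_def e3_def e4_def e5_def e6_def e7_def al_def ga_def cc
    by (simp_all add: algebra_simps)
  have "e0^2+e1^2+e2^2+e3^2+e4^2+e5^2+e6^2+e7^2 = - ((1-al)*ga)"
    using I1 I2 det by (simp add: algebra_simps)
  moreover have "(1-al)*ga \<ge> 0" using al1 ga0 by simp
  ultimately have S0: "e0^2+e1^2+e2^2+e3^2+e4^2+e5^2+e6^2+e7^2 = 0" and P0: "(1-al)*ga = 0"
    by (smt (verit) zero_le_power2)+
  then have "e0^2 = 0 \<and> e2^2 = 0 \<and> e3^2 = 0 \<and> e4^2 = 0 \<and> e5^2 = 0 \<and> e6^2 = 0"
    by (smt (verit) zero_le_power2)
  then have "e0 = 0 \<and> e2 = 0 \<and> e3 = 0 \<and> e4 = 0 \<and> e5 = 0 \<and> e6 = 0" by simp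
  then have N: "x = al*a + ga*c" "y1 = (al - ga)*b1" "y2 = (al-ga)*b2" "w = al*c + ga*a"
    using I3 by (simp_all add: algebra_simps)
  show ?thesis
  proof (cases "ga = 0")
    case True
    then show ?thesis using N al0 al1 by (intro exI[of _ al]) auto
  next
    case False
    then have "al = 1" using P0 by simp
    then show ?thesis using N ga0 ga1 by (intro exI[of _ "1 - ga"]) (auto simp: algebra_simps)
  qed
qed



lemma psd2I:
  assumes "X \<in> carrier_mat 2 2" "X$$(0,0) = complex_of_real a" "X$$(1,1) = complex_of_real c"
    "X$$(1,0) = cnj (X$$(0,1))" "a \<ge> 0" "c \<ge> 0" "(cmod (X$$(0,1)))^2 \<le> a * c"
  shows "psd2 X"
  using assms unfolding psd2_def by simp

lemma herm_decomp:
  assumes D: "D \<in> carrier_mat 2 2" and Dp: "D$$(0,0) = complex_of_real p" and Dr: "D$$(1,1) = complex_of_real r"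
    and Dh: "D$$(1,0) = cnj (D$$(0,1))"
  shows "\<exists>d1 d2 P1 P2. psd2 P1 \<and> psd2 P2 \<and>
     (\<forall>i<2. \<forall>j<2. P1$$(i,j) + P2$$(i,j) = (if i = j then 1 else 0)) \<and>
     (\<forall>i<2. \<forall>j<2. D$$(i,j) = complex_of_real d1 * P1$$(i,j) + complex_of_real d2 * P2$$(i,j)) \<and>
     d1 + d2 = p + r \<and> d1 * d2 = p * r - (cmod (D$$(0,1)))^2"
proof -
  define z where "z = D$$(0,1)"
  define s where "s = sqrt ((p-r)^2 + 4*(cmod z)^2)"
  have s0: "s \<ge> 0" unfolding s_def by simp
  have ss: "s^2 = (p-r)^2 + 4*(cmod z)^2" unfolding s_def by simp
  have Dz: "D$$(0, Suc 0) = z" "D$$(Suc 0, 0) = cnj z" "D$$(Suc 0, Suc 0) = complex_of_real r"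
    using Dh Dr by (simp_all add: z_def)
  show ?thesis
  proof (cases "s = 0")
    case True
    then have "(p-r)^2 + 4*(cmod z)^2 = 0" using ss by simp
    then have pr: "p = r" and z0: "z = 0"
      by (smt (verit) zero_le_power2 power_zero_numeral norm_eq_zero power2_less_eq_zero_iff)+
    have I: "psd2 (1\<^sub>m 2)" by (rule psd2I[of _ 1 1]) auto
    have Z: "psd2 (0\<^sub>m 2 2)" by (rule psd2I[of _ 0 0]) auto
    show ?thesis
      apply (rule exI[of _ p], rule exI[of _ p], rule exI[of _ "1\<^sub>m 2"], rule exI[of _ "0\<^sub>m 2 2"])
      using I Z Dp Dz pr z0 by (auto simp: less2_cases z_def)
  next
    case False
    then have sp: "s > 0" using s0 by simp
    define d1 where "d1 = (p + r + s)/2"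
    define d2 where "d2 = (p + r - s)/2"
    have "sqrt ((p-r)^2) \<le> s" unfolding s_def by (rule real_sqrt_le_mono) simp
    then have sge: "\<bar>p - r\<bar> \<le> s" by simp
    have prod: "(p - d2) * (r - d2) = (cmod z)^2"
    proof -
      have "(p - d2) * (r - d2) = (s^2 - (p-r)^2)/4" unfolding d2_def by (simp add: power2_eq_square field_simps)
      then show ?thesis using ss by simp
    qed
    have prod2: "(d1 - r) * (d1 - p) = (cmod z)^2"
    proof -
      have "(d1 - r) * (d1 - p) = (s^2 - (p-r)^2)/4" unfolding d1_def by (simp add: power2_eq_square field_simps)
      then show ?thesis using ss by simp
    qed
    define P1 where "P1 = mat 2 2 (\<lambda>(i,j). (D$$(i,j) - (if i = j then complex_of_real d2 else 0)) / complex_of_real s)"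
    define P2 where "P2 = mat 2 2 (\<lambda>(i,j). ((if i = j then complex_of_real d1 else 0) - D$$(i,j)) / complex_of_real s)"
    have sc: "complex_of_real s \<noteq> 0" using sp by simp
    have cz: "(cmod (z / complex_of_real s))^2 = (cmod z)^2 / s^2"
      using sp by (simp add: norm_divide power_divide)
    have psd1: "psd2 P1"
    proof (rule psd2I[of _ "(p - d2)/s" "(r - d2)/s"])
      show "(cmod (P1 $$ (0, 1)))^2 \<le> (p - d2) / s * ((r - d2) / s)"
        unfolding P1_def using cz prod sp Dz by (simp add: power2_eq_square)
    qed (use Dp Dz sp sge in \<open>auto simp: P1_def d2_def\<close>)
    have psd2': "psd2 P2"
    proof (rule psd2I[of _ "(d1 - p)/s" "(d1 - r)/s"])
      have "(cmod (- z / complex_of_real s))^2 = (cmod z)^2 / s^2" using cz by (simp add: norm_divide)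
      then show "(cmod (P2 $$ (0, 1)))^2 \<le> (d1 - p) / s * ((d1 - r) / s)"
        unfolding P2_def using prod2 sp Dz by (simp add: power2_eq_square mult.commute)
    qed (use Dp Dz sp sge in \<open>auto simp: P2_def d1_def\<close>)
    have dd: "d1 - d2 = s" unfolding d1_def d2_def by (simp add: field_simps)
    have sum: "\<forall>i<2. \<forall>j<2. P1$$(i,j) + P2$$(i,j) = (if i = j then 1 else 0)"
    proof (intro allI impI)
      fix i j :: nat assume "i < 2" "j < 2"
      then show "P1$$(i,j) + P2$$(i,j) = (if i = j then 1 else 0)"
        using sc dd unfolding P1_def P2_def
        by (auto simp: add_divide_distrib[symmetric] of_real_diff[symmetric] simp del: of_real_diff)
    qed
    have dec: "\<forall>i<2. \<forall>j<2. D$$(i,j) = complex_of_real d1 * P1$$(i,j) + complex_of_real d2 * P2$$(i,j)"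
    proof (intro allI impI)
      fix i j :: nat assume ij: "i < 2" "j < 2"
      have "complex_of_real d1 * P1$$(i,j) + complex_of_real d2 * P2$$(i,j)
          = (complex_of_real d1 - complex_of_real d2) * D$$(i,j) / complex_of_real s"
        using ij sc unfolding P1_def P2_def by (cases "i = j") (simp_all add: field_simps)
      also have "\<dots> = D$$(i,j)" using dd sc by (simp flip: of_real_diff)
      finally show "D$$(i,j) = complex_of_real d1 * P1$$(i,j) + complex_of_real d2 * P2$$(i,j)" by simp
    qed
    have "d1 + d2 = p + r" unfolding d1_def d2_def by (simp add: field_simps)
    moreover have "d1 * d2 = p * r - (cmod z)^2"
    proof -
      have "d1 * d2 = ((p+r)^2 - s^2)/4" unfolding d1_def d2_def by (simp add: power2_eq_square field_simps)
      then show ?thesis using ss by (simp add: power2_eq_square field_simps)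
    qed
    ultimately show ?thesis using psd1 psd2' sum dec unfolding z_def by blast
  qed
qed



lemma psd2D:
  assumes "psd2 X"
  obtains a c x where "X \<in> carrier_mat 2 2" "X$$(0,0) = complex_of_real a" "X$$(1,1) = complex_of_real c"
    "X$$(0,1) = x" "X$$(1,0) = cnj x" "a \<ge> 0" "c \<ge> 0" "(Re x)^2 + (Im x)^2 \<le> a * c"
  using assms unfolding psd2_def by (metis cmod_power2)

lemma combo:
  assumes A: "psd2 A" and B: "psd2 B" and S: "\<sigma> \<in> carrier_mat 2 2"
    and e: "\<forall>i<2. \<forall>j<2. \<sigma>$$(i,j) = complex_of_real al * A$$(i,j) + complex_of_real be * B$$(i,j)"
  shows "trace_norm (blk \<sigma>) \<le> 2 * (\<bar>al\<bar> * (Re (A$$(0,0)) + Re (A$$(1,1))) + \<bar>be\<bar> * (Re (B$$(0,0)) + Re (B$$(1,1))))"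
proof -
  obtain a1 a2 x where Ac: "A \<in> carrier_mat 2 2" and A1: "A$$(0,0) = complex_of_real a1" and A2: "A$$(1,1) = complex_of_real a2"
    and Ax: "A$$(0,1) = x" "A$$(1,0) = cnj x" and a1: "a1 \<ge> 0" and a2: "a2 \<ge> 0" and ax: "(Re x)^2 + (Im x)^2 \<le> a1 * a2"
    using psd2D[OF A] by metis
  obtain b1 b2 y where Bc: "B \<in> carrier_mat 2 2" and B1: "B$$(0,0) = complex_of_real b1" and B2: "B$$(1,1) = complex_of_real b2"
    and By: "B$$(0,1) = y" "B$$(1,0) = cnj y" and b1: "b1 \<ge> 0" and b2: "b2 \<ge> 0" and yb: "(Re y)^2 + (Im y)^2 \<le> b1 * b2"
    using psd2D[OF B] by metis
  have s00: "\<sigma>$$(0,0) = complex_of_real (al*a1 + be*b1)" using e A1 B1 by simp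
  have s11: "\<sigma>$$(1,1) = complex_of_real (al*a2 + be*b2)" using e A2 B2 by simp
  have s01: "\<sigma>$$(0,1) = complex_of_real al * x + complex_of_real be * y" using e Ax By by simp
  have s10: "\<sigma>$$(1,0) = cnj (\<sigma>$$(0,1))" using e Ax By s01 by simp
  have "trace_norm (blk \<sigma>) = 2 * gfun (al*a1 + be*b1 + (al*a2 + be*b2)) ((al*a1 + be*b1) * (al*a2 + be*b2) - (cmod (\<sigma>$$(0,1)))^2)"
    by (rule trace_norm_blk[OF S s00 s11 s10])
  also have "(cmod (\<sigma>$$(0,1)))^2 = (al*Re x + be*Re y)^2 + (al*Im x + be*Im y)^2"
    unfolding s01 cmod_power2 by simp
  also have "al*a1 + be*b1 + (al*a2 + be*b2) = al*(a1+a2) + be*(b1+b2)" by (simp add: algebra_simps)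
  finally have "trace_norm (blk \<sigma>) = 2 * gfun (al*(a1+a2) + be*(b1+b2)) ((al*a1 + be*b1) * (al*a2 + be*b2) - ((al*Re x + be*Re y)^2 + (al*Im x + be*Im y)^2))" .
  also have "\<dots> \<le> 2 * (\<bar>al\<bar>*(a1+a2) + \<bar>be\<bar>*(b1+b2))"
    using real_bound[OF a1 a2 b1 b2 ax yb, of al be] by simp
  finally show ?thesis using A1 A2 B1 B2 by simp
qed

lemma mat2_eqI:
  assumes "A \<in> carrier_mat 2 2" "B \<in> carrier_mat 2 2" "A$$(0,0) = B$$(0,0)" "A$$(0,1) = B$$(0,1)"
    "A$$(1,0) = B$$(1,0)" "A$$(1,1) = B$$(1,1)"
  shows "A = B"
  by (rule eq_matI) (use assms in \<open>auto simp: less2_cases\<close>)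



definition rho0 :: "complex mat" where
  "rho0 = mat 4 4 (\<lambda>(i,j). if i = 0 \<and> j = 0 then 1 else 0)"

lemma rho0_density: "density_mat 4 rho0"
proof -
  have c: "rho0 \<in> carrier_mat 4 4" unfolding rho0_def by simp
  have adj: "mat_adjoint rho0 = rho0"
    by (rule eq_matI) (auto simp: rho0_def)
  have q: "0 \<le> Re (conjugate v \<bullet> (rho0 *\<^sub>v v))" if v: "v \<in> carrier_vec 4" for v
  proof -
    have "conjugate v \<bullet> (rho0 *\<^sub>v v) = cnj (v$0) * v$0"
      using v by (simp add: rho0_def scalar_prod_def sum4' mult_mat_vec_def row_def)
    also have "\<dots> = complex_of_real ((cmod (v$0))^2)" by (metis complex_norm_square mult.commute)
    finally show ?thesis by simp
  qed
  have tr: "mtrace rho0 = 1" unfolding mtrace_def rho0_def by (simp add: sum4)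
  show ?thesis unfolding density_mat_def psd_mat_def using c adj q tr by auto
qed

lemma density_bound:
  assumes R: "density_mat 4 \<rho>" and P1: "psd2 P1" and P2: "psd2 P2"
    and Dc: "D \<in> carrier_mat 2 2"
    and psum: "\<forall>i<2. \<forall>j<2. P1$$(i,j) + P2$$(i,j) = (if i = j then 1 else 0)"
    and dec: "\<forall>i<2. \<forall>j<2. D$$(i,j) = complex_of_real d1 * P1$$(i,j) + complex_of_real d2 * P2$$(i,j)"
  shows "trace_norm (blk (Cm \<rho> D)) \<le> 2 * max \<bar>d1\<bar> \<bar>d2\<bar>"
proof -
  have pR: "psd_mat 4 \<rho>" and tr: "mtrace \<rho> = 1" and Rc: "\<rho> \<in> carrier_mat 4 4"
    using R unfolding density_mat_def psd_mat_def by auto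
  define A where "A = Cm \<rho> P1"
  define B where "B = Cm \<rho> P2"
  have pA: "psd2 A" unfolding A_def by (rule Cm_psd[OF pR P1])
  have pB: "psd2 B" unfolding B_def by (rule Cm_psd[OF pR P2])
  have decs: "D$$(0,0) = complex_of_real d1 * P1$$(0,0) + complex_of_real d2 * P2$$(0,0)"
    "D$$(0,Suc 0) = complex_of_real d1 * P1$$(0,Suc 0) + complex_of_real d2 * P2$$(0,Suc 0)"
    "D$$(Suc 0,0) = complex_of_real d1 * P1$$(Suc 0,0) + complex_of_real d2 * P2$$(Suc 0,0)"
    "D$$(Suc 0,Suc 0) = complex_of_real d1 * P1$$(Suc 0,Suc 0) + complex_of_real d2 * P2$$(Suc 0,Suc 0)"
    using dec by auto
  have e: "\<forall>i<2. \<forall>j<2. Cm \<rho> D $$(i,j) = complex_of_real d1 * A$$(i,j) + complex_of_real d2 * B$$(i,j)"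
    unfolding A_def B_def Cm_def by (auto simp: sum2 decs algebra_simps)
  have Sc: "Cm \<rho> D \<in> carrier_mat 2 2" by (simp add: Cm_def)
  have bnd: "trace_norm (blk (Cm \<rho> D)) \<le> 2 * (\<bar>d1\<bar> * (Re (A$$(0,0)) + Re (A$$(1,1))) + \<bar>d2\<bar> * (Re (B$$(0,0)) + Re (B$$(1,1))))"
    by (rule combo[OF pA pB Sc e])
  have ps: "P1$$(0,0) + P2$$(0,0) = 1" "P1$$(0,1) + P2$$(0,1) = 0" "P1$$(1,0) + P2$$(1,0) = 0" "P1$$(1,1) + P2$$(1,1) = 1"
    using psum by auto
  have "A$$(0,0) + A$$(1,1) + B$$(0,0) + B$$(1,1) = \<rho>$$(0,0) + \<rho>$$(1,1) + \<rho>$$(2,2) + \<rho>$$(3,3)"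
  proof -
    have "A$$(0,0) + A$$(1,1) + B$$(0,0) + B$$(1,1) =
      \<rho>$$(0,0) * (P1$$(0,0) + P2$$(0,0)) + \<rho>$$(0,2) * (P1$$(1,0) + P2$$(1,0)) + \<rho>$$(2,0) * (P1$$(0,1) + P2$$(0,1)) + \<rho>$$(2,2) * (P1$$(1,1) + P2$$(1,1))
     + \<rho>$$(1,1) * (P1$$(0,0) + P2$$(0,0)) + \<rho>$$(1,3) * (P1$$(1,0) + P2$$(1,0)) + \<rho>$$(3,1) * (P1$$(0,1) + P2$$(0,1)) + \<rho>$$(3,3) * (P1$$(1,1) + P2$$(1,1))"
      unfolding A_def B_def Cm_def by (simp add: sum2 algebra_simps numeral_2_eq_2 numeral_3_eq_3)
    then show ?thesis unfolding ps by simp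
  qed
  also have "\<dots> = mtrace \<rho>" unfolding mtrace_def using Rc by (simp add: sum4 algebra_simps)
  finally have "Re (A$$(0,0)) + Re (A$$(1,1)) + (Re (B$$(0,0)) + Re (B$$(1,1))) = 1"
    using tr by (metis plus_complex.simps(1) one_complex.simps(1) add.assoc)
  moreover have "Re (A$$(0,0)) + Re (A$$(1,1)) \<ge> 0" "Re (B$$(0,0)) + Re (B$$(1,1)) \<ge> 0"
    using pA pB unfolding psd2_def by auto
  ultimately have "\<bar>d1\<bar> * (Re (A$$(0,0)) + Re (A$$(1,1))) + \<bar>d2\<bar> * (Re (B$$(0,0)) + Re (B$$(1,1))) \<le> max \<bar>d1\<bar> \<bar>d2\<bar>"
  proof -
    fix u v :: real
    show "\<lbrakk>u + v = 1; u \<ge> 0; v \<ge> 0\<rbrakk> \<Longrightarrow> \<bar>d1\<bar> * u + \<bar>d2\<bar> * v \<le> max \<bar>d1\<bar> \<bar>d2\<bar>" for u v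
    proof -
      assume uv: "u + v = 1" "u \<ge> 0" "v \<ge> 0"
      have "\<bar>d1\<bar> * u \<le> max \<bar>d1\<bar> \<bar>d2\<bar> * u" using uv by (intro mult_right_mono) auto
      moreover have "\<bar>d2\<bar> * v \<le> max \<bar>d1\<bar> \<bar>d2\<bar> * v" using uv by (intro mult_right_mono) auto
      ultimately have "\<bar>d1\<bar> * u + \<bar>d2\<bar> * v \<le> max \<bar>d1\<bar> \<bar>d2\<bar> * (u + v)" by (simp add: algebra_simps)
      then show ?thesis using uv by simp
    qed
  qed
  then have "2 * (\<bar>d1\<bar> * (Re (A$$(0,0)) + Re (A$$(1,1))) + \<bar>d2\<bar> * (Re (B$$(0,0)) + Re (B$$(1,1)))) \<le> 2 * max \<bar>d1\<bar> \<bar>d2\<bar>"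
    by simp
  with bnd show ?thesis by (rule order_trans)
qed



theorem corollary6:
  fixes M0 M1 N0 N1 :: "complex mat"
  assumes "proj_meas2 M0 M1"
    and "M0 \<noteq> 0\<^sub>m 2 2" and "M1 \<noteq> 0\<^sub>m 2 2"
    and "povm2 N0 N1"
    and "MEWC M0 M1 N0 N1"
  shows "\<exists>\<alpha>::real. 0 \<le> \<alpha> \<and> \<alpha> \<le> 1 \<and>
           ((N0 = complex_of_real \<alpha> \<cdot>\<^sub>m M0 \<and> N1 = complex_of_real (1 - \<alpha>) \<cdot>\<^sub>m M0 + M1) \<or>
            (N1 = complex_of_real \<alpha> \<cdot>\<^sub>m M1 \<and> N0 = M0 + complex_of_real (1 - \<alpha>) \<cdot>\<^sub>m M1))"
proof -
  have pm: "povm2 M0 M1" and proj: "M0 * M0 = M0" using assms(1) unfolding proj_meas2_def by auto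
  have pM0: "psd_mat 2 M0" and pM1: "psd_mat 2 M1" and MM: "M0 + M1 = 1\<^sub>m 2" using pm unfolding povm2_def by auto
  have pN0: "psd_mat 2 N0" and pN1: "psd_mat 2 N1" and NN: "N0 + N1 = 1\<^sub>m 2" using assms(4) unfolding povm2_def by auto
  have cM0: "M0 \<in> carrier_mat 2 2" and cM1: "M1 \<in> carrier_mat 2 2" and cN0: "N0 \<in> carrier_mat 2 2" and cN1: "N1 \<in> carrier_mat 2 2"
    using pM0 pM1 pN0 pN1 unfolding psd_mat_def by auto
  have m1: "M1$$(i,j) = (if i = j then 1 else 0) - M0$$(i,j)" if "i<2" "j<2" for i j
    using arg_cong[OF MM, of "\<lambda>A. A$$(i,j)"] that cM0 cM1 by (auto simp: eq_diff_eq eq_neg_iff_add_eq_0 add.commute)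
  have n1: "N1$$(i,j) = (if i = j then 1 else 0) - N0$$(i,j)" if "i<2" "j<2" for i j
    using arg_cong[OF NN, of "\<lambda>A. A$$(i,j)"] that cN0 cN1 by (auto simp: eq_diff_eq eq_neg_iff_add_eq_0 add.commute)
  obtain a c b where M00: "M0$$(0,0) = complex_of_real a" and M11: "M0$$(1,1) = complex_of_real c"
    and M01: "M0$$(0,1) = b" and M10: "M0$$(1,0) = cnj b" and a0: "a \<ge> 0" and c0: "c \<ge> 0"
    using psd2D[OF psd_mat2_psd2[OF pM0]] by metis
  obtain x w y where N00: "N0$$(0,0) = complex_of_real x" and N11: "N0$$(1,1) = complex_of_real w"
    and N01: "N0$$(0,1) = y" and N10: "N0$$(1,0) = cnj y" and x0: "x \<ge> 0" and w0: "w \<ge> 0"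
    and yN0: "(Re y)^2 + (Im y)^2 \<le> x * w"
    using psd2D[OF psd_mat2_psd2[OF pN0]] by metis
  obtain x' w' y' where N1_00: "N1$$(0,0) = complex_of_real x'" and N1_11: "N1$$(1,1) = complex_of_real w'"
    and N1_01: "N1$$(0,1) = y'" and x'0: "x' \<ge> 0" and w'0: "w' \<ge> 0"
    and yN1: "(Re y')^2 + (Im y')^2 \<le> x' * w'"
    using psd2D[OF psd_mat2_psd2[OF pN1]] by metis
  have "complex_of_real x' = 1 - complex_of_real x" using N1_00 n1[of 0 0] N00 by simp
  then have xx: "x' = 1 - x" by (metis of_real_1 of_real_diff of_real_eq_iff)
  have "complex_of_real w' = 1 - complex_of_real w" using N1_11 n1[of 1 1] N11 by simp
  then have ww: "w' = 1 - w" by (metis of_real_1 of_real_diff of_real_eq_iff)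
  have yy: "y' = - y" using N1_01 n1[of 0 1] N01 by simp
  have x1: "1 - x \<ge> 0" and w1: "1 - w \<ge> 0" using x'0 w'0 xx ww by auto
  have yN1': "(Re y)^2 + (Im y)^2 \<le> (1-x) * (1-w)" using yN1 xx ww yy by simp
  define sB where "sB = (Re b)^2 + (Im b)^2"
  have bcb: "b * cnj b = complex_of_real sB" unfolding sB_def by (rule complex_mult_cnj)
  have cbb: "cnj b * b = complex_of_real sB" using bcb by (simp add: mult.commute)
  have pj: "(M0 * M0)$$(i,j) = M0$$(i,j)" for i j using proj by simp
  have e00: "complex_of_real a * complex_of_real a + b * cnj b = complex_of_real a"
    using pj[of 0 0] cM0 M00 M01 M10 by (simp add: scalar_prod_def sum2' row_def col_def)
  have e01: "complex_of_real a * b + b * complex_of_real c = b"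
    using pj[of 0 1] cM0 M00 M01 M11 by (simp add: scalar_prod_def sum2' row_def col_def)
  have e11: "cnj b * b + complex_of_real c * complex_of_real c = complex_of_real c"
    using pj[of 1 1] cM0 M11 M01 M10 by (simp add: scalar_prod_def sum2' row_def col_def)
  have r00: "a * a + sB = a" using e00 unfolding bcb by (metis of_real_add of_real_mult of_real_eq_iff)
  have r11: "sB + c * c = c" using e11 unfolding cbb by (metis of_real_add of_real_mult of_real_eq_iff)
  have r01: "b * complex_of_real (a + c - 1) = 0" using e01 by (simp add: algebra_simps)
  have ac: "a + c = 1 \<and> sB = a * c"
  proof (cases "b = 0")
    case False
    then have "complex_of_real (a + c - 1) = 0" using r01 by (metis mult_eq_0_iff)
    then have "a + c - 1 = 0" by (metis of_real_eq_0_iff)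
    then have "a + c = 1" by simp
    moreover have "sB = a * c"
    proof -
      have "c = 1 - a" using \<open>a + c = 1\<close> by simp
      have "sB = a - a*a" using r00 by linarith
      also have "\<dots> = a * (1 - a)" by (simp add: algebra_simps)
      finally show ?thesis using \<open>c = 1 - a\<close> by simp
    qed
    ultimately show ?thesis by simp
  next
    case True
    then have sB0: "sB = 0" unfolding sB_def by simp
    then have "a * a = a" "c * c = c" using r00 r11 by auto
    then have av: "a = 0 \<or> a = 1" and cv: "c = 0 \<or> c = 1" by (auto simp: mult_eq_self_implies_10)
    have "\<not> (a = 0 \<and> c = 0)"
    proof
      assume "a = 0 \<and> c = 0"
      then have "M0 = 0\<^sub>m 2 2" using True M00 M01 M10 M11 cM0 by (intro mat2_eqI) auto
      then show False using assms(2) by simp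
    qed
    moreover have "\<not> (a = 1 \<and> c = 1)"
    proof
      assume "a = 1 \<and> c = 1"
      then have "M1 = 0\<^sub>m 2 2" using True M00 M01 M10 M11 cM1 m1[of 0 0] m1[of 0 1] m1[of 1 0] m1[of 1 1]
        by (intro mat2_eqI) auto
      then show False using assms(3) by simp
    qed
    ultimately show ?thesis using av cv sB0 by auto
  qed
  define D where "D = M0 - N0"
  have cD: "D \<in> carrier_mat 2 2" unfolding D_def using cN0 by (rule minus_carrier_mat)
  have D00: "D$$(0,0) = complex_of_real (a - x)" unfolding D_def using cM0 cN0 M00 N00 by simp
  have D11: "D$$(1,1) = complex_of_real (c - w)" unfolding D_def using cM0 cN0 M11 N11 by simp
  have D01: "D$$(0,1) = b - y" unfolding D_def using cM0 cN0 M01 N01 by simp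
  have D10: "D$$(1,0) = cnj (D$$(0,1))" unfolding D_def using cM0 cN0 M10 N10 M01 N01 by simp
  obtain d1 d2 P1 P2 where P1: "psd2 P1" and P2: "psd2 P2"
    and psum: "\<forall>i<2. \<forall>j<2. P1$$(i,j) + P2$$(i,j) = (if i = j then 1 else 0)"
    and dec: "\<forall>i<2. \<forall>j<2. D$$(i,j) = complex_of_real d1 * P1$$(i,j) + complex_of_real d2 * P2$$(i,j)"
    and dsum: "d1 + d2 = (a - x) + (c - w)" and dprod: "d1 * d2 = (a - x) * (c - w) - (cmod (D$$(0,1)))^2"
    using herm_decomp[OF cD D00 D11 D10] by blast
  define Dl where "Dl = delta_channel M0 M1 N0 N1"
  define S where "S = mat 2 2 (\<lambda>(k,l). (M0 - N0)$$(l,k) / 2)"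
  have me1: "me_norm2 Dl = trace_norm (blk S)"
    unfolding me_norm2_def Dl_def S_def using choi_blk[OF cM0 cM1 cN0 cN1 MM NN] by simp
  have cS: "S \<in> carrier_mat 2 2" unfolding S_def by simp
  have S00: "S$$(0,0) = complex_of_real ((a - x)/2)" unfolding S_def using D00 by (simp add: D_def)
  have S11: "S$$(1,1) = complex_of_real ((c - w)/2)" unfolding S_def using D11 by (simp add: D_def)
  have S01: "S$$(0,1) = cnj (D$$(0,1)) / 2" unfolding S_def using D10 by (simp add: D_def)
  have S10: "S$$(1,0) = cnj (S$$(0,1))" unfolding S_def using D10 by (simp add: D_def)
  have "trace_norm (blk S) = 2 * gfun ((a - x)/2 + (c - w)/2) ((a - x)/2 * ((c - w)/2) - (cmod (S$$(0,1)))^2)"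
    by (rule trace_norm_blk[OF cS S00 S11 S10])
  also have "(a - x)/2 + (c - w)/2 = d1/2 + d2/2" using dsum by (simp add: field_simps)
  also have "(a - x)/2 * ((c - w)/2) - (cmod (S$$(0,1)))^2 = (d1/2) * (d2/2)"
    unfolding S01 using dprod by (simp add: norm_divide power_divide)
  also have "gfun (d1/2 + d2/2) ((d1/2) * (d2/2)) = \<bar>d1/2\<bar> + \<bar>d2/2\<bar>" by (rule gfun_eig)
  finally have me: "me_norm2 Dl = \<bar>d1\<bar> + \<bar>d2\<bar>" unfolding me1 by simp
  have bound: "\<forall>t \<in> {trace_norm (tensor_id2 Dl \<rho>) | \<rho>. density_mat 4 \<rho>}. t \<le> 2 * max \<bar>d1\<bar> \<bar>d2\<bar>"
  proof
    fix t assume "t \<in> {trace_norm (tensor_id2 Dl \<rho>) | \<rho>. density_mat 4 \<rho>}"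
    then obtain \<rho> where R: "density_mat 4 \<rho>" and t: "t = trace_norm (tensor_id2 Dl \<rho>)" by blast
    have Rc: "\<rho> \<in> carrier_mat 4 4" using R unfolding density_mat_def psd_mat_def by auto
    have "tensor_id2 Dl \<rho> = blk (Cm \<rho> D)"
      unfolding Dl_def D_def by (rule tensor_blk[OF cM0 cM1 cN0 cN1 MM NN Rc])
    then show "t \<le> 2 * max \<bar>d1\<bar> \<bar>d2\<bar>" using density_bound[OF R P1 P2 cD psum dec] t by simp
  qed
  have ne: "{trace_norm (tensor_id2 Dl \<rho>) | \<rho>. density_mat 4 \<rho>} \<noteq> {}" using rho0_density by blast
  have dia: "diamond_norm2 Dl \<le> 2 * max \<bar>d1\<bar> \<bar>d2\<bar>"
    unfolding diamond_norm2_def by (rule cSup_least[OF ne]) (use bound in blast)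
  have "diamond_norm2 Dl = 2 * me_norm2 Dl" using assms(5) unfolding MEWC_def Dl_def by simp
  then have "\<bar>d1\<bar> + \<bar>d2\<bar> \<le> max \<bar>d1\<bar> \<bar>d2\<bar>" using dia me by simp
  then have "d1 = 0 \<or> d2 = 0" by (auto simp: max_def split: if_splits)
  then have "d1 * d2 = 0" by auto
  then have det0: "(a - x) * (c - w) - ((Re b - Re y)^2 + (Im b - Im y)^2) = 0"
    using dprod unfolding D01 cmod_power2 by simp
  have bb: "(Re b)^2 + (Im b)^2 = a * c" using ac unfolding sB_def by simp
  obtain al where al: "0 \<le> al" "al \<le> 1"
    and cases: "(x = al*a \<and> Re y = al*Re b \<and> Im y = al*Im b \<and> w = al*c) \<or>
     (x = a + (1-al)*c \<and> Re y = al*Re b \<and> Im y = al*Im b \<and> w = c + (1-al)*a)"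
    using part2_real[OF conjunct1[OF ac] bb a0 c0 x0 w0 yN0 x1 w1 yN1' det0] by blast
  have yb: "y = complex_of_real al * b" using cases by (auto simp: complex_eq_iff)
  have M1e: "M1$$(0,0) = 1 - complex_of_real a" "M1$$(0,1) = - b" "M1$$(1,0) = - cnj b" "M1$$(1,1) = 1 - complex_of_real c"
    using m1[of 0 0] m1[of 0 1] m1[of 1 0] m1[of 1 1] M00 M01 M10 M11 by simp_all
  have N1e: "N1$$(0,0) = 1 - complex_of_real x" "N1$$(0,1) = - y" "N1$$(1,0) = - cnj y" "N1$$(1,1) = 1 - complex_of_real w"
    using n1[of 0 0] n1[of 0 1] n1[of 1 0] n1[of 1 1] N00 N01 N10 N11 by simp_all
  have cc: "complex_of_real c = 1 - complex_of_real a" using conjunct1[OF ac]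
    by (metis add_diff_cancel_left' of_real_1 of_real_add)
  note ents = N00 N01 N10 N11 M00 M01 M10 M11 M1e N1e
  note ents' = ents[unfolded One_nat_def]
  show ?thesis
  proof (intro exI[of _ al] conjI al)
    show "(N0 = complex_of_real al \<cdot>\<^sub>m M0 \<and> N1 = complex_of_real (1 - al) \<cdot>\<^sub>m M0 + M1) \<or>
          (N1 = complex_of_real al \<cdot>\<^sub>m M1 \<and> N0 = M0 + complex_of_real (1 - al) \<cdot>\<^sub>m M1)"
      using cases
    proof
      assume h: "x = al*a \<and> Re y = al*Re b \<and> Im y = al*Im b \<and> w = al*c"
      have "N0 = complex_of_real al \<cdot>\<^sub>m M0"
        by (rule mat2_eqI) (use cN0 cM0 h in \<open>simp_all add: ents' yb cc algebra_simps\<close>)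
      moreover have "N1 = complex_of_real (1 - al) \<cdot>\<^sub>m M0 + M1"
        by (rule mat2_eqI) (use cN1 cM0 cM1 h in \<open>simp_all add: ents' yb cc algebra_simps\<close>)
      ultimately show ?thesis by simp
    next
      assume h: "x = a + (1-al)*c \<and> Re y = al*Re b \<and> Im y = al*Im b \<and> w = c + (1-al)*a"
      have ccr: "c = 1 - a" using ac by simp
      have hxw: "complex_of_real x = complex_of_real (a + (1-al)*(1-a))" "complex_of_real w = complex_of_real ((1-a) + (1-al)*a)"
        using h ccr by simp_all
      have "N1 = complex_of_real al \<cdot>\<^sub>m M1"
        by (rule mat2_eqI) (use cN1 cM1 in \<open>simp_all add: ents' yb cc hxw algebra_simps\<close>)
      moreover have "N0 = M0 + complex_of_real (1 - al) \<cdot>\<^sub>m M1"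
        by (rule mat2_eqI) (use cN0 cM0 cM1 in \<open>simp_all add: ents' yb cc hxw algebra_simps\<close>)
      ultimately show ?thesis by simp
    qed
  qed
qed


end
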